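(* In the social learning model, assume there exist $c>0$, $k>0$ and $x_0>0$ such that $G_-(-x)=c\,x^{-k}$ and $G_+(x)=1-c\,x^{-k}$ for all $x>x_0$. Then there exists $M>0$ such that, for every realization of the actions, every $t\ge2$ and every $1\le s\le t$, $|\ell_s|\le M\,\ell^*_t$.
   Context: Social learning model. A state $\theta\in\{-1,+1\}$ is drawn with $\mathbb{P}(\theta=+1)=\mathbb{P}(\theta=-1)=1/2$. Agents $t=1,2,\dots$ receive private signals $s_t\in\mathbb{R}$ that are i.i.d. conditionally on $\theta$, with CDF $F_+$ if $\theta=+1$ and $F_-$ if $\theta=-1$; $F_+$ and $F_-$ are mutually absolutely continuous. Let $L_t=\log\frac{\mathbb{P}(\theta=+1\mid s_t)}{\mathbb{P}(\theta=-1\mid s_t)}$ be the private log-likelihood ratio, and let $G_+$, $G_-$ denote the CDFs of $L_t$ conditional on $\theta=+1$, $\theta=-1$ respectively. Signals are assumed unbounded: for every $M\in\mathbb{R}$, $\mathbb{P}(L_t>M)>0$ and $\mathbb{P}(L_t<-M)>0$. Agent $t$ observes $a_1,\dots,a_{t-1}$ and her own signal and chooses $a_t\in\{-1,+1\}$ (utility $1$ if $a_t=\theta$, else $0$). The public belief is $\mu_t=\mathbb{P}(\theta=+1\mid a_1,\dots,a_{t-1})$ and $\ell_t=\log\frac{\mu_t}{1-\mu_t}$ (so $\ell_1=0$). In equilibrium $a_t=+1$ iff $\ell_t+L_t>0$, and otherwise $a_t=-1$. Consequently $\ell_{t+1}=\ell_t+D_+(\ell_t)$ if $a_t=+1$ and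 $\ell_{t+1}=\ell_t+D_-(\ell_t)$ if $a_t=-1$, where $D_+(x)=\log\frac{1-G_+(-x)}{1-G_-(-x)}$ and $D_-(x)=\log\frac{G_+(-x)}{G_-(-x)}$. We write $\mathbb{P}_+(\cdot)=\mathbb{P}(\cdot\mid\theta=+1)$ and $\mathbb{E}_+$ for the corresponding expectation. $\ell^*_t$ denotes the value of $\ell_t$ on the event $a_1=\cdots=a_{t-1}=+1$, i.e., $\ell^*_1=0$ and $\ell^*_{t+1}=\ell^*_t+D_+(\ell^*_t)$. *)

theory Defs
  imports "HOL-Probability.Probability"
begin

text \<open>Signal distributions: Fp = F_+ (law of s given theta=+1), Fm = F_- (law given theta=-1),
  both probability measures on the Borel sets of the reals.  With prior 1/2 the private
  log-likelihood ratio is L(s) = log (dF_+/dF_-)(s).\<close>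

definition LLR :: "real measure \<Rightarrow> real measure \<Rightarrow> real \<Rightarrow> real" where
  "LLR Fp Fm s = ln (enn2real (RN_deriv Fm Fp s))"

definition Gplus :: "real measure \<Rightarrow> real measure \<Rightarrow> real \<Rightarrow> real" where
  "Gplus Fp Fm x = measure Fp {s \<in> space Fp. LLR Fp Fm s \<le> x}"

definition Gminus :: "real measure \<Rightarrow> real measure \<Rightarrow> real \<Rightarrow> real" where
  "Gminus Fp Fm x = measure Fm {s \<in> space Fm. LLR Fp Fm s \<le> x}"

definition Dplus :: "real measure \<Rightarrow> real measure \<Rightarrow> real \<Rightarrow> real" where
  "Dplus Fp Fm x = ln ((1 - Gplus Fp Fm (-x)) / (1 - Gminus Fp Fm (-x)))"

definition Dminus :: "real measure \<Rightarrow> real measure \<Rightarrow> real \<Rightarrow> real" where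
  "Dminus Fp Fm x = ln (Gplus Fp Fm (-x) / Gminus Fp Fm (-x))"

text \<open>Actions: a t = True means a_t = +1, a t = False means a_t = -1 (for t \<ge> 1).
  pub n is the public log-likelihood ratio ell_(n+1).\<close>
primrec pub :: "real measure \<Rightarrow> real measure \<Rightarrow> (nat \<Rightarrow> bool) \<Rightarrow> nat \<Rightarrow> real" where
  "pub Fp Fm a 0 = 0"
| "pub Fp Fm a (Suc n) = pub Fp Fm a n +
     (if a (Suc n) then Dplus Fp Fm (pub Fp Fm a n) else Dminus Fp Fm (pub Fp Fm a n))"

definition ell :: "real measure \<Rightarrow> real measure \<Rightarrow> (nat \<Rightarrow> bool) \<Rightarrow> nat \<Rightarrow> real" where
  "ell Fp Fm a t = pub Fp Fm a (t - 1)"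

definition ell_star :: "real measure \<Rightarrow> real measure \<Rightarrow> nat \<Rightarrow> real" where
  "ell_star Fp Fm t = ell Fp Fm (\<lambda>_. True) t"

end

theory Submission
  imports Defs
begin


lemma ln_lower: "0 < (y::real) \<Longrightarrow> 1 - 1/y \<le> ln y"
  using ln_le_minus_one[of "1/y"] by (simp add: ln_div)

lemma pow_mvt:
  fixes x d p :: real assumes x: "0 < x" and d: "0 \<le> d" and p: "1 \<le> p"
  shows "(x+d) powr p - x powr p \<le> p * (x+d) powr (p-1) * d"
    and "p * x powr (p-1) * d \<le> (x+d) powr p - x powr p"
proof -
  have "(x+d) powr p - x powr p \<le> p * (x+d) powr (p-1) * d \<and> p * x powr (p-1) * d \<le> (x+d) powr p - x powr p"
  proof (cases "d = 0")
    case True then show ?thesis by simp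
  next
    case False
    then have lt: "x < x + d" using d by simp
    have der: "\<And>t. x \<le> t \<Longrightarrow> t \<le> x + d \<Longrightarrow> ((\<lambda>z. z powr p) has_real_derivative p * t powr (p-1)) (at t)"
      using x by (intro has_real_derivative_powr) auto
    obtain z where z: "x < z" "z < x + d" "(x+d) powr p - x powr p = (x + d - x) * (p * z powr (p-1))"
      using MVT2[OF lt der] by blast
    have "x powr (p-1) \<le> z powr (p-1)" using z x p by (intro powr_mono2) auto
    moreover have "z powr (p-1) \<le> (x+d) powr (p-1)" using z x p by (intro powr_mono2) auto
    ultimately show ?thesis using z(3) d p
      by (auto intro!: mult_right_mono mult_left_mono simp: mult.commute mult.left_commute)
  qed
  then show "(x+d) powr p - x powr p \<le> p * (x+d) powr (p-1) * d"
    and "p * x powr (p-1) * d \<le> (x+d) powr p - x powr p" by auto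
qed

lemma superadd:
  fixes a b p :: real assumes a: "0 \<le> a" and b: "0 \<le> b" and p: "1 \<le> p"
  shows "a powr p + b powr p \<le> (a+b) powr p"
proof (cases "a + b = 0")
  case True then have "a = 0" "b = 0" using a b by auto
  then show ?thesis by simp
next
  case False
  then have s: "0 < a + b" using a b by simp
  define t where "t = a / (a+b)"
  have t01: "0 \<le> t" "t \<le> 1" using a b s by (auto simp: t_def)
  have at: "a = t * (a+b)" "b = (1-t) * (a+b)" using s by (auto simp: t_def field_simps)
  have "t powr p \<le> t powr 1" using t01 p by (intro powr_mono') auto
  moreover have "(1-t) powr p \<le> (1-t) powr 1" using t01 p by (intro powr_mono') auto
  ultimately have "t powr p + (1-t) powr p \<le> 1" using t01 by auto
  then have "(t powr p + (1-t) powr p) * (a+b) powr p \<le> (a+b) powr p"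
    using mult_right_mono[of _ 1 "(a+b) powr p"] by simp
  moreover have "a powr p = t powr p * (a+b) powr p" "b powr p = (1-t) powr p * (a+b) powr p"
  proof -
    have "a powr p = (t * (a+b)) powr p" using at(1) by simp
    also have "\<dots> = t powr p * (a+b) powr p" using t01 s by (simp add: powr_mult)
    finally show "a powr p = t powr p * (a+b) powr p" .
    have "b powr p = ((1-t) * (a+b)) powr p" using at(2) by simp
    also have "\<dots> = (1-t) powr p * (a+b) powr p" using t01 s by (simp add: powr_mult)
    finally show "b powr p = (1-t) powr p * (a+b) powr p" .
  qed
  ultimately show ?thesis by (simp add: algebra_simps)
qed




locale sl =
  fixes Fp Fm :: "real measure" and c k x0 :: real
  assumes P: "prob_space Fp" and Mm: "prob_space Fm"
  and sp: "sets Fp = sets borel" and sm: "sets Fm = sets borel"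
  and ac1: "absolutely_continuous Fm Fp" and ac2: "absolutely_continuous Fp Fm"
  and cpos: "c>0" and kpos: "k>0" and x0pos: "x0>0"
  and tail: "\<And>x. x > x0 \<Longrightarrow> Gminus Fp Fm (- x) = c * x powr (- k) \<and> Gplus Fp Fm x = 1 - c * x powr (- k)"
begin

abbreviation "R \<equiv> RN_deriv Fm Fp"
abbreviation "L \<equiv> LLR Fp Fm"

lemma spFm: "space Fm = UNIV" using sm sets_eq_imp_space_eq[of Fm borel] by simp
lemma spFp: "space Fp = UNIV" using sp sets_eq_imp_space_eq[of Fp borel] by simp

lemma dens: "density Fm R = Fp"
proof -
  interpret prob_space Fm by (rule Mm)
  show ?thesis using ac1 sp sm by (intro density_RN_deriv) auto
qed

lemma Rmeas: "R \<in> borel_measurable Fm" by simp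

lemma Lmeas: "L \<in> borel_measurable borel"
proof -
  have "L \<in> borel_measurable Fm" unfolding LLR_def by measurable
  then show ?thesis using sm measurable_cong_sets by blast
qed

lemma AE_fin: "AE x in Fm. R x \<noteq> \<infinity>"
proof -
  interpret prob_space Fm by (rule Mm)
  interpret N: prob_space Fp by (rule P)
  show ?thesis using ac1 sp sm by (intro RN_deriv_finite) (auto simp: N.sigma_finite_measure_axioms)
qed

lemma AE_pos: "AE x in Fm. R x \<noteq> 0"
proof -
  let ?Z = "{x \<in> space Fm. R x = 0}"
  have Zs: "?Z \<in> sets Fm" by measurable
  have "emeasure Fp ?Z = emeasure (density Fm R) ?Z" by (simp add: dens)
  also have "\<dots> = (\<integral>\<^sup>+x. R x * indicator ?Z x \<partial>Fm)" using Zs by (simp add: emeasure_density)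
  also have "\<dots> = (\<integral>\<^sup>+x. 0 \<partial>Fm)" by (intro nn_integral_cong) (auto simp: indicator_def)
  finally have "?Z \<in> null_sets Fp" using Zs sp sm by (simp add: null_sets_def)
  then have "?Z \<in> null_sets Fm" using ac2 unfolding absolutely_continuous_def by blast
  then show ?thesis by (rule AE_I') auto
qed

lemma AE_expL: "AE x in Fm. R x = ennreal (exp (L x))"
  using AE_fin AE_pos
proof eventually_elim
  case (elim x)
  have "enn2real (R x) > 0" using elim by (simp add: enn2real_positive_iff less_top[symmetric] zero_less_iff_neq_zero)
  then show ?case using elim by (simp add: LLR_def ennreal_enn2real_if)
qed

lemma empB: assumes B: "B \<in> sets borel"
  shows "emeasure Fp B = (\<integral>\<^sup>+x. ennreal (exp (L x)) * indicator B x \<partial>Fm)"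
proof -
  have "emeasure Fp B = emeasure (density Fm R) B" by (simp add: dens)
  also have "\<dots> = (\<integral>\<^sup>+x. R x * indicator B x \<partial>Fm)" using B sm by (simp add: emeasure_density)
  also have "\<dots> = (\<integral>\<^sup>+x. ennreal (exp (L x)) * indicator B x \<partial>Fm)"
    using AE_expL by (intro nn_integral_cong_AE) auto
  finally show ?thesis .
qed

lemma change_le: assumes B: "B \<in> sets borel" and le: "\<And>s. s \<in> B \<Longrightarrow> L s \<le> b"
  shows "measure Fp B \<le> exp b * measure Fm B"
proof -
  interpret p: prob_space Fp by (rule P)
  interpret m: prob_space Fm by (rule Mm)
  have "emeasure Fp B \<le> (\<integral>\<^sup>+x. ennreal (exp b) * indicator B x \<partial>Fm)"
    unfolding empB[OF B] using le by (intro nn_integral_mono) (auto simp: indicator_def)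
  also have "\<dots> = ennreal (exp b) * emeasure Fm B" using B sm by (simp add: nn_integral_cmult_indicator)
  finally have "ennreal (measure Fp B) \<le> ennreal (exp b * measure Fm B)"
    by (simp add: p.emeasure_eq_measure m.emeasure_eq_measure ennreal_mult)
  moreover have "0 \<le> measure Fp B" "0 \<le> exp b * measure Fm B" by auto
  ultimately show ?thesis using ennreal_le_iff by auto
qed

lemma change_ge: assumes B: "B \<in> sets borel" and le: "\<And>s. s \<in> B \<Longrightarrow> b \<le> L s"
  shows "exp b * measure Fm B \<le> measure Fp B"
proof -
  interpret p: prob_space Fp by (rule P)
  interpret m: prob_space Fm by (rule Mm)
  have "ennreal (exp b) * emeasure Fm B = (\<integral>\<^sup>+x. ennreal (exp b) * indicator B x \<partial>Fm)"
     using B sm by (simp add: nn_integral_cmult_indicator)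
  also have "\<dots> \<le> emeasure Fp B"
    unfolding empB[OF B] using le by (intro nn_integral_mono) (auto simp: indicator_def)
  finally have "ennreal (exp b * measure Fm B) \<le> ennreal (measure Fp B)"
    by (simp add: p.emeasure_eq_measure m.emeasure_eq_measure ennreal_mult)
  moreover have "0 \<le> measure Fp B" "0 \<le> exp b * measure Fm B" by auto
  ultimately show ?thesis using ennreal_le_iff by auto
qed

abbreviation "Gp \<equiv> Gplus Fp Fm"
abbreviation "Gm \<equiv> Gminus Fp Fm"

lemma setle[measurable]: "{s. L s \<le> y} \<in> sets borel" using Lmeas by measurable
lemma setgt[measurable]: "{s. y < L s} \<in> sets borel" using Lmeas by measurable
lemma setint[measurable]: "{s. w < L s \<and> L s \<le> y} \<in> sets borel" using Lmeas by measurable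

lemma Gp_eq: "Gp y = measure Fp {s. L s \<le> y}" by (simp add: Gplus_def spFp)
lemma Gm_eq: "Gm y = measure Fm {s. L s \<le> y}" by (simp add: Gminus_def spFm)

lemma G_bounds: "0 \<le> Gp y" "Gp y \<le> 1" "0 \<le> Gm y" "Gm y \<le> 1"
proof -
  interpret p: prob_space Fp by (rule P)
  interpret m: prob_space Fm by (rule Mm)
  show "0 \<le> Gp y" "Gp y \<le> 1" "0 \<le> Gm y" "Gm y \<le> 1" by (auto simp: Gp_eq Gm_eq)
qed

lemma G_mono: assumes "y \<le> y'" shows "Gp y \<le> Gp y'" "Gm y \<le> Gm y'"
proof -
  interpret p: prob_space Fp by (rule P)
  interpret m: prob_space Fm by (rule Mm)
  show "Gp y \<le> Gp y'" unfolding Gp_eq using assms sp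
    by (intro p.finite_measure_mono) auto
  show "Gm y \<le> Gm y'" unfolding Gm_eq using assms sm
    by (intro m.finite_measure_mono) auto
qed

lemma compl: "measure Fp {s. y < L s} = 1 - Gp y" "measure Fm {s. y < L s} = 1 - Gm y"
proof -
  interpret p: prob_space Fp by (rule P)
  interpret m: prob_space Fm by (rule Mm)
  have e: "{s. y < L s} = UNIV - {s. L s \<le> y}" by auto
  show "measure Fp {s. y < L s} = 1 - Gp y" unfolding Gp_eq e
    using p.prob_compl[of "{s. L s \<le> y}"] sp spFp by auto
  show "measure Fm {s. y < L s} = 1 - Gm y" unfolding Gm_eq e
    using m.prob_compl[of "{s. L s \<le> y}"] sm spFm by auto
qed

lemma interv: assumes "w \<le> y"
  shows "measure Fp {s. w < L s \<and> L s \<le> y} = Gp y - Gp w"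
        "measure Fm {s. w < L s \<and> L s \<le> y} = Gm y - Gm w"
proof -
  interpret p: prob_space Fp by (rule P)
  interpret m: prob_space Fm by (rule Mm)
  have e: "{s. w < L s \<and> L s \<le> y} = {s. L s \<le> y} - {s. L s \<le> w}" by auto
  show "measure Fp {s. w < L s \<and> L s \<le> y} = Gp y - Gp w" unfolding Gp_eq e
    using assms sp by (intro p.finite_measure_Diff) auto
  show "measure Fm {s. w < L s \<and> L s \<le> y} = Gm y - Gm w" unfolding Gm_eq e
    using assms sm by (intro m.finite_measure_Diff) auto
qed

lemma C1: assumes "w \<le> y" shows "Gp y \<le> exp w * Gm w + exp y * (Gm y - Gm w)"
proof -
  have a: "Gp w \<le> exp w * Gm w" unfolding Gp_eq Gm_eq by (rule change_le) auto
  have b: "Gp y - Gp w \<le> exp y * (Gm y - Gm w)"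
    unfolding interv[OF assms, symmetric] by (rule change_le) auto
  show ?thesis using a b by linarith
qed

lemma C2: assumes "w \<le> y" shows "exp w * (Gm y - Gm w) \<le> Gp y - Gp w"
    unfolding interv[OF assms, symmetric] by (rule change_ge) auto

lemma C3: "1 - Gm y \<le> exp (-y) * (1 - Gp y)"
proof -
  have "exp y * (1 - Gm y) \<le> 1 - Gp y" unfolding compl[symmetric] by (rule change_ge) auto
  then have "exp (-y) * (exp y * (1 - Gm y)) \<le> exp (-y) * (1 - Gp y)" by (simp add: mult_left_mono)
  moreover have "exp (-y) * (exp y * (1 - Gm y)) = 1 - Gm y"
    by (simp add: mult.assoc[symmetric] exp_add[symmetric])
  ultimately show ?thesis by simp
qed

lemma C4: assumes "y \<le> w" shows "exp (-w) * (Gp w - Gp y) \<le> Gm w - Gm y"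
proof -
  have "Gp w - Gp y \<le> exp w * (Gm w - Gm y)"
    unfolding interv[OF assms, symmetric] by (rule change_le) auto
  then have "exp (-w) * (Gp w - Gp y) \<le> exp (-w) * (exp w * (Gm w - Gm y))" by (simp add: mult_left_mono)
  moreover have "exp (-w) * (exp w * (Gm w - Gm y)) = Gm w - Gm y"
    by (simp add: mult.assoc[symmetric] exp_add[symmetric])
  ultimately show ?thesis by simp
qed

end



context sl begin

definition u :: "real \<Rightarrow> real" where "u x = c * x powr (-k)"
definition \<theta> :: real where "\<theta> = 1 - (2/3) powr k"
definition \<kappa> :: real where "\<kappa> = - ln \<theta>"

lemma theta: "0 < \<theta>" "\<theta> \<le> 1"
  using kpos by (auto simp: \<theta>_def powr01_less_one)

lemma kappa: "0 \<le> \<kappa>" using theta by (simp add: \<kappa>_def)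

lemma u_pos: "0 < x \<Longrightarrow> 0 < u x" using cpos by (simp add: u_def)

lemma u_anti: "0 < x \<Longrightarrow> x \<le> y \<Longrightarrow> u y \<le> u x"
  using cpos kpos unfolding u_def by (intro mult_left_mono powr_mono2') auto

lemma u_mul: "0 < x \<Longrightarrow> x powr k * u x = c"
  by (simp add: u_def powr_minus field_simps)

lemma u_32: "0 < x \<Longrightarrow> u (3/2*x) = (2/3) powr k * u x"
proof -
  assume x: "0 < x"
  have "(3/2*x) powr (-k) = (3/2) powr (-k) * x powr (-k)" using powr_mult[of "3/2" x "-k"] x by auto
  moreover have "(3/2::real) powr (-k) = (2/3) powr k"
    by (simp add: powr_minus powr_divide)
  ultimately show ?thesis by (simp add: u_def)
qed

lemma tm: "x0 < x \<Longrightarrow> Gm (-x) = u x" using tail by (simp add: u_def)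
lemma tp: "x0 < x \<Longrightarrow> Gp x = 1 - u x" using tail by (simp add: u_def)

lemma W1: assumes z: "x0 < z" shows "exp (-(3/2*z)) * (\<theta> * u z) \<le> Gp (-z)"
proof -
  have z0: "0 < z" using z x0pos by simp
  have "exp (-(3/2*z)) * (Gm (-z) - Gm (-(3/2*z))) \<le> Gp (-z) - Gp (-(3/2*z))"
    using z0 by (intro C2) auto
  moreover have "Gm (-(3/2*z)) = u (3/2*z)" using z z0 by (intro tm) auto
  moreover have "Gm (-z) = u z" using z by (rule tm)
  moreover have "0 \<le> Gp (-(3/2*z))" by (rule G_bounds)
  ultimately show ?thesis using u_32[OF z0] by (simp add: \<theta>_def algebra_simps)
qed

lemma W2: assumes z: "x0 < z" shows "exp (-(3/2*z)) * (\<theta> * u z) \<le> 1 - Gm z"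
proof -
  have z0: "0 < z" using z x0pos by simp
  have "exp (-(3/2*z)) * (Gp (3/2*z) - Gp z) \<le> Gm (3/2*z) - Gm z"
    using z0 by (intro C4) auto
  moreover have "Gp (3/2*z) - Gp z = \<theta> * u z"
    using tp[of "3/2*z"] tp[of z] z z0 u_32[OF z0] by (simp add: \<theta>_def algebra_simps)
  moreover have "Gm (3/2*z) \<le> 1" by (rule G_bounds)
  ultimately show ?thesis by simp
qed

lemma W_pos: "0 < z \<Longrightarrow> 0 < exp (-(3/2*z)) * (\<theta> * u z)"
  using theta u_pos by simp

lemma Gm_pos: "0 < Gm y"
proof -
  define z where "z = max (x0+1) (-y)"
  have "Gm (-z) = u z" using x0pos by (intro tm) (auto simp: z_def)
  moreover have "Gm (-z) \<le> Gm y" by (intro G_mono) (auto simp: z_def)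
  moreover have "0 < u z" using x0pos by (intro u_pos) (auto simp: z_def)
  ultimately show ?thesis by simp
qed

lemma Gp_pos: "0 < Gp y"
proof -
  define z where "z = max (x0+1) (-y)"
  have zz: "x0 < z" "0 < z" using x0pos by (auto simp: z_def)
  have "0 < Gp (-z)" using W1[OF zz(1)] W_pos[OF zz(2)] by linarith
  moreover have "Gp (-z) \<le> Gp y" by (intro G_mono) (auto simp: z_def)
  ultimately show ?thesis by simp
qed

lemma Gp_lt1: "Gp y < 1"
proof -
  define z where "z = max (x0+1) y"
  have "Gp z = 1 - u z" using x0pos by (intro tp) (auto simp: z_def)
  moreover have "Gp y \<le> Gp z" by (intro G_mono) (auto simp: z_def)
  moreover have "0 < u z" using x0pos by (intro u_pos) (auto simp: z_def)
  ultimately show ?thesis by simp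
qed

lemma Gm_lt1: "Gm y < 1"
proof -
  define z where "z = max (x0+1) y"
  have zz: "x0 < z" "0 < z" using x0pos by (auto simp: z_def)
  have "0 < 1 - Gm z" using W2[OF zz(1)] W_pos[OF zz(2)] by linarith
  moreover have "Gm y \<le> Gm z" by (intro G_mono) (auto simp: z_def)
  ultimately show ?thesis by simp
qed

lemma X_ex: "\<exists>X. x0 + 1 \<le> X \<and> 2 * \<kappa> \<le> X \<and> u X \<le> 1/2"
proof -
  define X where "X = max (max (x0+1) (2*\<kappa>)) ((2*c) powr (1/k))"
  have X0: "0 < X" using x0pos by (auto simp: X_def)
  have r0: "0 < (2*c) powr (1/k)" using cpos by simp
  have "X powr (-k) \<le> ((2*c) powr (1/k)) powr (-k)"
    using kpos r0 by (intro powr_mono2') (auto simp: X_def)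
  also have "\<dots> = 1/(2*c)" using kpos cpos by (simp add: powr_powr powr_minus divide_simps)
  finally have "c * X powr (-k) \<le> c * (1/(2*c))" using cpos by (intro mult_left_mono) auto
  then have "u X \<le> 1/2" using cpos by (simp add: u_def)
  then show ?thesis by (intro exI[of _ X]) (auto simp: X_def)
qed

definition X :: real where "X = (SOME X. x0 + 1 \<le> X \<and> 2 * \<kappa> \<le> X \<and> u X \<le> 1/2)"

lemma X: "x0 + 1 \<le> X" "2 * \<kappa> \<le> X" "u X \<le> 1/2"
  using someI_ex[OF X_ex] unfolding X_def[symmetric] by auto

lemma X1: "1 \<le> X" "0 < X" "x0 < X" using X x0pos by auto

lemma u_half: "X \<le> x \<Longrightarrow> u x \<le> 1/2"
  using u_anti[of X x] X X1 by auto

end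



lemma ln_div_ge: "0 < (a::real) \<Longrightarrow> 0 < b \<Longrightarrow> exp y * b \<le> a \<Longrightarrow> y \<le> ln (a/b)"
  by (subst ln_ge_iff) (auto simp: field_simps)

lemma ln_div_le: "0 < (a::real) \<Longrightarrow> 0 < b \<Longrightarrow> a \<le> exp y * b \<Longrightarrow> ln (a/b) \<le> y"
proof -
  assume a: "0 < a" "0 < b" "a \<le> exp y * b"
  then have "a/b \<le> exp y" by (simp add: field_simps)
  then have "ln (a/b) \<le> ln (exp y)" using a by (subst ln_le_cancel_iff) auto
  then show ?thesis by simp
qed

lemma exp_m1: "exp (-1::real) \<le> 1/2"
proof -
  have "2 \<le> exp (1::real)" using exp_ge_add_one_self[of 1] by simp
  then show ?thesis by (simp add: exp_minus field_simps)
qed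

lemma frac_id: "0 < (a::real) \<Longrightarrow> 0 < b \<Longrightarrow> (a - b) / a = 1 - 1 / (a / b)"
  by (simp add: field_simps)

context sl begin

abbreviation "Dp \<equiv> Dplus Fp Fm"
abbreviation "Dm \<equiv> Dminus Fp Fm"

lemma Dp_eq: "Dp x = ln ((1 - Gp (-x)) / (1 - Gm (-x)))" by (simp add: Dplus_def)
lemma Dm_eq: "Dm x = ln (Gp (-x) / Gm (-x))" by (simp add: Dminus_def)

lemma PQpos: "0 < 1 - Gp y" "0 < 1 - Gm y" using Gp_lt1 Gm_lt1 by auto

lemma F_nonneg: "0 \<le> x + Dp x"
proof -
  have "1 - Gm (-x) \<le> exp x * (1 - Gp (-x))" using C3[of "-x"] by simp
  then have "exp (-x) * (1 - Gm (-x)) \<le> exp (-x) * (exp x * (1 - Gp (-x)))" by (simp add: mult_left_mono)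
  also have "\<dots> = 1 - Gp (-x)" by (simp add: mult.assoc[symmetric] exp_add[symmetric])
  finally have "-x \<le> Dp x" unfolding Dp_eq using PQpos by (intro ln_div_ge) auto
  then show ?thesis by simp
qed

lemma E_nonpos: "x + Dm x \<le> 0"
proof -
  have "Gp (-x) \<le> exp (-x) * Gm (-x)" using C1[of "-x" "-x"] by simp
  then have "Dm x \<le> -x" unfolding Dm_eq using Gp_pos Gm_pos by (intro ln_div_le) auto
  then show ?thesis by simp
qed

lemma U1: assumes "X \<le> x" shows "x + Dp x \<le> x + 2 * u x"
proof -
  have xx: "x0 < x" "0 < x" using assms X1 by auto
  have Q: "1 - Gm (-x) = 1 - u x" using tm[OF xx(1)] by simp
  have u: "0 < u x" "u x \<le> 1/2" using u_pos[OF xx(2)] u_half[OF assms] by auto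
  have "1 \<le> (1 + 2 * u x) * (1 - u x)" using u by (simp add: algebra_simps power2_eq_square)
  also have "\<dots> \<le> exp (2 * u x) * (1 - u x)" using u exp_ge_add_one_self[of "2 * u x"]
    by (intro mult_right_mono) auto
  finally have "1 - Gp (-x) \<le> exp (2 * u x) * (1 - Gm (-x))" unfolding Q using G_bounds(1)[of "-x"] by linarith
  then have "Dp x \<le> 2 * u x" unfolding Dp_eq using PQpos by (intro ln_div_le) auto
  then show ?thesis by simp
qed

lemma U2: assumes "0 \<le> x" "x \<le> X" shows "x + Dp x \<le> X - ln (1 - Gm 0)"
proof -
  have q: "1 - Gm 0 \<le> 1 - Gm (-x)" using G_mono(2)[of "-x" 0] assms by simp
  have q0: "0 < 1 - Gm 0" using PQpos by simp
  have "1 - Gp (-x) \<le> 1" using G_bounds(1)[of "-x"] by simp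
  also have "1 = exp (- ln (1 - Gm 0)) * (1 - Gm 0)" using q0 by (simp add: exp_minus)
  also have "\<dots> \<le> exp (- ln (1 - Gm 0)) * (1 - Gm (-x))" using q by (intro mult_left_mono) auto
  finally have "Dp x \<le> - ln (1 - Gm 0)" unfolding Dp_eq using PQpos by (intro ln_div_le) auto
  then show ?thesis using assms by simp
qed

lemma U3: assumes "X \<le> z" shows "-z + Dp (-z) \<le> z"
proof -
  have zz: "x0 < z" "0 < z" using assms X1 by auto
  have P: "1 - Gp z = u z" using tp[OF zz(1)] by simp
  have ek: "exp \<kappa> * \<theta> = 1" using theta by (simp add: \<kappa>_def exp_minus)
  have "u z = exp (3/2*z + \<kappa>) * (exp (-(3/2*z)) * (\<theta> * u z))"
  proof -
    have "exp (3/2*z + \<kappa>) * (exp (-(3/2*z)) * (\<theta> * u z)) = (exp (3/2*z) * exp (-(3/2*z))) * (exp \<kappa> * \<theta>) * u z"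
      by (simp add: exp_add)
    also have "\<dots> = u z" using ek by (simp add: exp_minus)
    finally show ?thesis by simp
  qed
  also have "\<dots> \<le> exp (3/2*z + \<kappa>) * (1 - Gm z)" using W2[OF zz(1)] by (intro mult_left_mono) auto
  finally have "Dp (-z) \<le> 3/2*z + \<kappa>" unfolding Dp_eq using PQpos P u_pos[OF zz(2)] by (intro ln_div_le) auto
  then show ?thesis using X(2) assms by simp
qed

lemma U4: assumes "0 \<le> z" "z \<le> X" shows "-z + Dp (-z) \<le> - ln (1 - Gm X)"
proof -
  have q: "1 - Gm X \<le> 1 - Gm z" using G_mono(2)[of z X] assms by simp
  have q0: "0 < 1 - Gm X" using PQpos by simp
  have "1 - Gp z \<le> 1" using G_bounds(1)[of z] by simp
  also have "1 = exp (- ln (1 - Gm X)) * (1 - Gm X)" using q0 by (simp add: exp_minus)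
  also have "\<dots> \<le> exp (- ln (1 - Gm X)) * (1 - Gm z)" using q by (intro mult_left_mono) auto
  finally have "Dp (-z) \<le> - ln (1 - Gm X)" unfolding Dp_eq using PQpos by (intro ln_div_le) auto
  then show ?thesis using assms by simp
qed

lemma V1: assumes "X \<le> z" shows "-z - 2 * u z \<le> -z + Dm (-z)"
proof -
  have zz: "x0 < z" "0 < z" using assms X1 by auto
  have u: "0 < u z" "u z \<le> 1/2" using u_pos[OF zz(2)] u_half[OF assms] by auto
  have e: "1 + 2 * u z \<le> exp (2 * u z)" by (rule exp_ge_add_one_self)
  have "exp (- (2 * u z)) = 1 / exp (2 * u z)" by (simp add: exp_minus divide_inverse)
  also have "\<dots> \<le> 1 / (1 + 2 * u z)" using e u by (intro divide_left_mono) auto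
  also have "\<dots> \<le> 1 - u z" using u by (simp add: field_simps)
  finally have a: "exp (- (2 * u z)) \<le> 1 - u z" .
  have "exp (- (2 * u z)) * Gm z \<le> exp (- (2 * u z))" using G_bounds(4)[of z] by (simp add: mult_left_le)
  also have "\<dots> \<le> Gp z" using a tp[OF zz(1)] by simp
  finally have "- (2 * u z) \<le> Dm (-z)" unfolding Dm_eq using Gp_pos Gm_pos by (intro ln_div_ge) auto
  then show ?thesis by simp
qed

lemma V2: assumes "0 \<le> z" "z \<le> X" shows "-X + ln (Gp 0) \<le> -z + Dm (-z)"
proof -
  have "exp (ln (Gp 0)) * Gm z = Gp 0 * Gm z" using Gp_pos by simp
  also have "\<dots> \<le> Gp 0" using G_bounds(4)[of z] Gp_pos[of 0] by (simp add: mult_left_le)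
  also have "\<dots> \<le> Gp z" using G_mono(1)[of 0 z] assms by simp
  finally have "ln (Gp 0) \<le> Dm (-z)" unfolding Dm_eq using Gp_pos Gm_pos by (intro ln_div_ge) auto
  then show ?thesis using assms by simp
qed

lemma V3: assumes "X \<le> x" shows "-x \<le> x + Dm x"
proof -
  have xx: "x0 < x" "0 < x" using assms X1 by auto
  have ek: "exp (-\<kappa>) = \<theta>" using theta by (simp add: \<kappa>_def)
  have "exp (-(3/2*x) - \<kappa>) = exp (-(3/2*x)) * exp (-\<kappa>)" by (subst exp_add[symmetric]) simp
  then have "exp (-(3/2*x) - \<kappa>) * Gm (-x) = exp (-(3/2*x)) * (\<theta> * u x)"
    using tm[OF xx(1)] ek by simp
  also have "\<dots> \<le> Gp (-x)" using W1[OF xx(1)] .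
  finally have "-(3/2*x) - \<kappa> \<le> Dm x" unfolding Dm_eq using Gp_pos Gm_pos by (intro ln_div_ge) auto
  then show ?thesis using X(2) assms by simp
qed

lemma V4: assumes "0 \<le> x" "x \<le> X" shows "ln (Gp (-X)) \<le> x + Dm x"
proof -
  have "exp (ln (Gp (-X))) * Gm (-x) = Gp (-X) * Gm (-x)" using Gp_pos by simp
  also have "\<dots> \<le> Gp (-X)" using G_bounds(4)[of "-x"] Gp_pos[of "-X"] by (simp add: mult_left_le)
  also have "\<dots> \<le> Gp (-x)" using G_mono(1)[of "-X" "-x"] assms by simp
  finally have "ln (Gp (-X)) \<le> Dm x" unfolding Dm_eq using Gp_pos Gm_pos by (intro ln_div_ge) auto
  then show ?thesis using assms by simp
qed

lemma L1: assumes "X \<le> x" shows "u x / 2 \<le> Dp x"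
proof -
  have xx: "x0 < x" "0 < x" using assms X1 by auto
  have u: "0 < u x" "u x \<le> 1/2" using u_pos[OF xx(2)] u_half[OF assms] by auto
  have Q: "1 - Gm (-x) = 1 - u x" using tm[OF xx(1)] by simp
  have "exp (-x) \<le> exp (-1)" using X1 assms by simp
  then have ex: "exp (-x) \<le> 1/2" using exp_m1 by linarith
  have "Gp (-x) \<le> exp (-x) * Gm (-x)" using C1[of "-x" "-x"] by simp
  also have "\<dots> = exp (-x) * u x" using tm[OF xx(1)] by simp
  also have "\<dots> \<le> 1/2 * u x" using ex u by (intro mult_right_mono) auto
  finally have P: "1 - u x / 2 \<le> 1 - Gp (-x)" by simp
  have "(1 - u x) / (1 - Gp (-x)) \<le> (1 - u x) / (1 - u x / 2)"
    using P u by (intro divide_left_mono) auto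
  also have "\<dots> \<le> 1 - u x / 2" using u by (simp add: field_simps power2_eq_square)
  finally have r: "(1 - Gm (-x)) / (1 - Gp (-x)) \<le> 1 - u x / 2" unfolding Q .
  have "1 - 1 / ((1 - Gp (-x)) / (1 - Gm (-x))) \<le> Dp x" unfolding Dp_eq using PQpos by (intro ln_lower) auto
  then show ?thesis using r by simp
qed

definition \<delta>0 :: real where "\<delta>0 = exp (-X) * (1 - exp (-1)) * u (X+1)"

lemma delta0: "0 < \<delta>0"
proof -
  have "exp (-1::real) < 1" by simp
  then show ?thesis using u_pos[of "X+1"] X1 by (simp add: \<delta>0_def)
qed

lemma L2: assumes "0 \<le> x" "x \<le> X" shows "\<delta>0 \<le> Dp x"
proof -
  define e where "e = exp (-x)"
  define g1 where "g1 = Gm (-x-1)"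
  have c1: "Gp (-x) \<le> exp (-x-1) * g1 + e * (Gm (-x) - g1)" using C1[of "-x-1" "-x"] by (simp add: e_def g1_def)
  have e1: "exp (-x-1) = e * exp (-1)" by (simp add: e_def exp_add[symmetric])
  have e01: "0 < e" "e \<le> 1" using assms by (auto simp: e_def)
  have gm: "0 \<le> Gm (-x)" by (rule G_bounds)
  have "0 \<le> (1 - e) * Gm (-x)" using e01 gm by simp
  then have "e * (1 - exp (-1)) * g1 \<le> Gm (-x) - Gp (-x)" using c1 unfolding e1 by (simp add: algebra_simps)
  moreover have "exp (-X) * (1 - exp (-1)) * u (X+1) \<le> e * (1 - exp (-1)) * g1"
  proof (intro mult_mono)
    show "exp (-X) \<le> e" using assms by (simp add: e_def)
    show "u (X+1) \<le> g1" unfolding g1_def using tm[of "X+1"] X1 G_mono(2)[of "-X-1" "-x-1"] assms by simp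
    show "0 \<le> e * (1 - exp (-1))" using e01 by simp
    show "0 \<le> u (X+1)" using u_pos[of "X+1"] X1 by simp
  qed (use e01 in auto)
  ultimately have d: "\<delta>0 \<le> (1 - Gp (-x)) - (1 - Gm (-x))" unfolding \<delta>0_def by linarith
  have P1: "0 < 1 - Gp (-x)" "1 - Gp (-x) \<le> 1" using PQpos G_bounds(1)[of "-x"] by auto
  have "(1 - Gp (-x)) - (1 - Gm (-x)) \<le> ((1 - Gp (-x)) - (1 - Gm (-x))) / (1 - Gp (-x))"
    using P1 d delta0 by (simp add: le_divide_eq)
  also have "\<dots> = 1 - 1 / ((1 - Gp (-x)) / (1 - Gm (-x)))"
    using frac_id[of "1 - Gp (-x)" "1 - Gm (-x)"] P1 PQpos by simp
  also have "\<dots> \<le> Dp x" unfolding Dp_eq using PQpos by (intro ln_lower) auto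
  finally show ?thesis using d by simp
qed

end



context sl begin

definition p :: real where "p = k + 1"
definition \<phi> :: "real \<Rightarrow> real" where "\<phi> x = \<bar>x\<bar> powr p"
definition Bc :: real where
  "Bc = max (max (X - ln (1 - Gm 0)) (- ln (1 - Gm X))) (max (X - ln (Gp 0)) (- ln (Gp (-X))))"
definition H :: real where "H = Bc powr p"
definition bb :: real where "bb = 2 * p * 2 powr k * c"
definition a0 :: real where "a0 = min (p * c / 2) (\<delta>0 powr p)"

lemma p1: "1 \<le> p" "0 < p" using kpos by (auto simp: p_def)

lemma Bc0: "0 \<le> Bc"
proof -
  have "ln (1 - Gm 0) \<le> 0" using PQpos(2)[of 0] G_bounds(3)[of 0] by simp
  then show ?thesis using X1 unfolding Bc_def by linarith
qed

lemma H0: "0 \<le> H" by (simp add: H_def)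
lemma bb0: "0 < bb" using cpos p1 by (simp add: bb_def)
lemma a00: "0 < a0" using cpos p1 delta0 by (simp add: a0_def)

lemma grow: assumes y: "X \<le> y" and m: "0 \<le> m" "m \<le> y + 2 * u y"
  shows "m powr p \<le> y powr p + bb"
proof -
  have yy: "0 < y" "1 \<le> y" using y X1 by auto
  have u: "0 < u y" "u y \<le> 1/2" using u_pos[OF yy(1)] u_half[OF y] by auto
  have "m powr p \<le> (y + 2 * u y) powr p" using m p1 by (intro powr_mono2) auto
  moreover have "(y + 2 * u y) powr p - y powr p \<le> p * (y + 2 * u y) powr (p-1) * (2 * u y)"
    using pow_mvt(1)[of y "2 * u y" p] yy u p1 by auto
  moreover have "(y + 2 * u y) powr (p-1) \<le> (2 * y) powr (p-1)"
    using u yy p1 by (intro powr_mono2) auto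
  moreover have "(2 * y) powr (p-1) = 2 powr k * y powr k" using yy by (simp add: p_def powr_mult)
  ultimately have "m powr p \<le> y powr p + p * (2 powr k * y powr k) * (2 * u y)"
    using p1 u by (smt (verit, best) mult_left_mono mult_right_mono zero_le_mult_iff)
  also have "p * (2 powr k * y powr k) * (2 * u y) = 2 * p * 2 powr k * (y powr k * u y)" by simp
  also have "\<dots> = bb" using u_mul[OF yy(1)] by (simp add: bb_def)
  finally show ?thesis .
qed

lemma phi_le: "\<bar>n\<bar> \<le> m \<Longrightarrow> \<phi> n \<le> m powr p"
  unfolding \<phi>_def using p1 by (intro powr_mono2) auto

lemma step_up: "\<phi> (x + Dp x) \<le> max (\<phi> x) H + bb"
proof -
  let ?n = "x + Dp x"
  have n0: "0 \<le> ?n" by (rule F_nonneg)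
  have "\<phi> ?n \<le> \<phi> x + bb \<or> \<phi> ?n \<le> H \<or> \<phi> ?n \<le> \<phi> x"
  proof (cases "X \<le> x")
    case True
    then have "?n powr p \<le> x powr p + bb" using grow[OF True n0 U1[OF True]] by simp
    then show ?thesis using True X1 n0 by (simp add: \<phi>_def)
  next
    case nX: False
    show ?thesis
    proof (cases "0 \<le> x")
      case True
      have "?n \<le> Bc" using U2[OF True] nX unfolding Bc_def by auto
      then show ?thesis using phi_le[of ?n Bc] n0 by (simp add: H_def)
    next
      case neg: False
      show ?thesis
      proof (cases "X \<le> -x")
        case True
        have "?n \<le> -x" using U3[OF True] by simp
        then show ?thesis using phi_le[of ?n "-x"] n0 neg by (simp add: \<phi>_def)
      next
        case False
        have "?n \<le> Bc" using U4[of "-x"] False neg unfolding Bc_def by auto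
        then show ?thesis using phi_le[of ?n Bc] n0 by (simp add: H_def)
      qed
    qed
  qed
  then show ?thesis using bb0 H0 by (auto simp: \<phi>_def)
qed

lemma step_down: "\<phi> (x + Dm x) \<le> max (\<phi> x) H + bb"
proof -
  let ?n = "x + Dm x"
  have n0: "?n \<le> 0" by (rule E_nonpos)
  have "\<phi> ?n \<le> \<phi> x + bb \<or> \<phi> ?n \<le> H \<or> \<phi> ?n \<le> \<phi> x"
  proof (cases "X \<le> -x")
    case True
    have "-?n \<le> -x + 2 * u (-x)" using V1[OF True] by simp
    then have "(-?n) powr p \<le> (-x) powr p + bb" using grow[OF True] n0 by simp
    then show ?thesis using True X1 n0 by (simp add: \<phi>_def)
  next
    case nX: False
    show ?thesis
    proof (cases "x \<le> 0")
      case True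
      have "-?n \<le> Bc" using V2[of "-x"] nX True unfolding Bc_def by auto
      then show ?thesis using phi_le[of ?n Bc] n0 by (simp add: H_def)
    next
      case pos: False
      show ?thesis
      proof (cases "X \<le> x")
        case True
        have "-?n \<le> x" using V3[OF True] by simp
        then show ?thesis using phi_le[of ?n "x"] n0 pos by (simp add: \<phi>_def)
      next
        case False
        have "-?n \<le> Bc" using V4[of x] False pos unfolding Bc_def by auto
        then show ?thesis using phi_le[of ?n Bc] n0 by (simp add: H_def)
      qed
    qed
  qed
  then show ?thesis using bb0 H0 by (auto simp: \<phi>_def)
qed

lemma step_star: assumes x: "0 \<le> x" shows "\<phi> x + a0 \<le> \<phi> (x + Dp x)"
proof -
  let ?d = "Dp x"
  have "x powr p + a0 \<le> (x + ?d) powr p"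
  proof (cases "X \<le> x")
    case True
    have xx: "0 < x" using True X1 by simp
    have d: "u x / 2 \<le> ?d" by (rule L1[OF True])
    have d0: "0 \<le> ?d" using d u_pos[OF xx] by simp
    have "p * x powr (p-1) * ?d \<le> (x + ?d) powr p - x powr p" using pow_mvt(2)[OF xx d0 p1(1)] .
    moreover have "p * x powr (p-1) * (u x / 2) \<le> p * x powr (p-1) * ?d"
      using d p1 by (intro mult_left_mono) auto
    moreover have "p * x powr (p-1) * (u x / 2) = p * c / 2" using u_mul[OF xx] by (simp add: p_def)
    ultimately have "p * c / 2 \<le> (x + ?d) powr p - x powr p" by linarith
    moreover have "a0 \<le> p * c / 2" by (simp add: a0_def)
    ultimately show ?thesis by linarith
  next
    case False
    have d: "\<delta>0 \<le> ?d" using L2[OF x] False by simp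
    have "\<delta>0 powr p \<le> ?d powr p" using d delta0 p1 by (intro powr_mono2) auto
    moreover have "x powr p + ?d powr p \<le> (x + ?d) powr p" using superadd[OF x _ p1(1)] d delta0 by simp
    ultimately show ?thesis by (simp add: a0_def)
  qed
  then show ?thesis using x F_nonneg[of x] by (simp add: \<phi>_def)
qed

lemma pub_upper: "\<phi> (pub Fp Fm a n) \<le> H + bb * real n"
proof (induction n)
  case 0 then show ?case using H0 p1 by (simp add: \<phi>_def)
next
  case (Suc n)
  let ?x = "pub Fp Fm a n"
  have "\<phi> (pub Fp Fm a (Suc n)) \<le> max (\<phi> ?x) H + bb"
    using step_up[of ?x] step_down[of ?x] by simp
  also have "\<dots> \<le> H + bb * real n + bb" using Suc bb0 H0 by auto
  finally show ?case by (simp add: algebra_simps)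
qed

lemma pub_star: "0 \<le> pub Fp Fm (\<lambda>_. True) n \<and> a0 * real n \<le> \<phi> (pub Fp Fm (\<lambda>_. True) n)"
proof (induction n)
  case 0 then show ?case by (simp add: \<phi>_def)
next
  case (Suc n)
  let ?x = "pub Fp Fm (\<lambda>_. True) n"
  have "\<phi> ?x + a0 \<le> \<phi> (?x + Dp ?x)" using step_star Suc by simp
  then show ?case using Suc F_nonneg[of ?x] by (simp add: algebra_simps)
qed

lemma main: "\<exists>M>0. \<forall>a t s. 2 \<le> t \<longrightarrow> 1 \<le> s \<longrightarrow> s \<le> t \<longrightarrow>
           \<bar>ell Fp Fm a s\<bar> \<le> M * ell_star Fp Fm t"
proof -
  define K where "K = (H + bb) / a0"
  have K0: "0 < K" using H0 bb0 a00 by (simp add: K_def)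
  define M where "M = K powr (1/p)"
  have M0: "0 < M" using K0 by (simp add: M_def)
  have "\<bar>ell Fp Fm a s\<bar> \<le> M * ell_star Fp Fm t" if ts: "2 \<le> t" "1 \<le> s" "s \<le> t" for a t s
  proof -
    let ?l = "pub Fp Fm a (s-1)" and ?m = "pub Fp Fm (\<lambda>_. True) (t-1)"
    have r: "1 \<le> real (t-1)" "real (s-1) \<le> real (t-1)" using ts by auto
    have "\<phi> ?l \<le> H + bb * real (s-1)" by (rule pub_upper)
    also have "\<dots> \<le> H * real (t-1) + bb * real (t-1)"
      using r H0 bb0 by (intro add_mono mult_left_mono) (auto simp: mult_le_cancel_left1)
    also have "\<dots> = K * (a0 * real (t-1))" using a00 by (simp add: K_def field_simps)
    also have "\<dots> \<le> K * \<phi> ?m" using pub_star[of "t-1"] K0 by (intro mult_left_mono) auto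
    finally have le: "\<phi> ?l \<le> K * \<phi> ?m" .
    have m0: "0 \<le> ?m" using pub_star by blast
    have "\<bar>?l\<bar> = (\<phi> ?l) powr (1/p)" using p1 by (simp add: \<phi>_def powr_powr)
    also have "\<dots> \<le> (K * \<phi> ?m) powr (1/p)" using le p1 by (intro powr_mono2) (auto simp: \<phi>_def)
    also have "\<dots> = K powr (1/p) * (\<phi> ?m) powr (1/p)" using K0 by (simp add: powr_mult \<phi>_def)
    also have "(\<phi> ?m) powr (1/p) = ?m" using p1 m0 by (simp add: \<phi>_def powr_powr)
    finally show ?thesis by (simp add: ell_def ell_star_def M_def)
  qed
  then show ?thesis using M0 by blast
qed

end

theorem lemma11:
  fixes Fp Fm :: "real measure" and c k x0 :: real
  assumes "prob_space Fp" and "prob_space Fm"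
    and "sets Fp = sets borel" and "sets Fm = sets borel"
    and "absolutely_continuous Fm Fp" and "absolutely_continuous Fp Fm"
    and unbounded: "\<And>M::real.
        (1/2) * measure Fp {s \<in> space Fp. LLR Fp Fm s > M}
          + (1/2) * measure Fm {s \<in> space Fm. LLR Fp Fm s > M} > 0
      \<and> (1/2) * measure Fp {s \<in> space Fp. LLR Fp Fm s < - M}
          + (1/2) * measure Fm {s \<in> space Fm. LLR Fp Fm s < - M} > 0"
    and "c > 0" and "k > 0" and "x0 > 0"
    and tail: "\<And>x. x > x0 \<Longrightarrow>
        Gminus Fp Fm (- x) = c * x powr (- k) \<and> Gplus Fp Fm x = 1 - c * x powr (- k)"
  shows "\<exists>M>0. \<forall>a t s. 2 \<le> t \<longrightarrow> 1 \<le> s \<longrightarrow> s \<le> t \<longrightarrow>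
           \<bar>ell Fp Fm a s\<bar> \<le> M * ell_star Fp Fm t"
  proof -
  interpret sl Fp Fm c k x0
    by (intro sl.intro) (use assms(1-6,8-10) tail in auto)
  show ?thesis by (rule main)
qed

end
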